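(* For every planar forest $F$: (1) $B^+(f_F)=f_{\bullet F}$, where $\bullet F$ is the forest obtained by placing the one-vertex tree $\bullet$ to the left of $F$; (2) $\gamma(f_F)=0$ if $F$ is not a tree, and $\gamma(f_F)=f_{B^-(F)}$ if $F$ is a tree, where $B^-(F)$ is the forest obtained by deleting the root of $F$; (3) $\Delta(f_F)=\sum_{F_1,F_2}f_{F_2}\otimes f_{F_1}$, the sum over all pairs of planar forests $(F_1,F_2)$ with $F_1F_2=F$.
   Context: Let $K$ be a field. Planar rooted trees have their children linearly ordered left to right; a planar forest is a finite, possibly empty, sequence $t_1\cdots t_n$ of planar rooted trees ($1$ = empty forest). $\mathcal{H}$ is the free associative unital $K$-algebra on planar rooted trees, with basis the planar forests and product concatenation, graded by weight (number of vertices). $B^+(F)$ is the tree obtained by grafting the trees of $F$ (in order) on a new common root. $\varepsilon(F)=\delta_{F,1}$. $\Delta$ is the unique linear map with $\Delta(1)=1\otimes1$, $\Delta(xy)=(x\otimes1)\Delta(y)+\Delta(x)(1\otimes y)-x\otimes y$, $\Delta(B^+(x))=B^+(x)\otimes 1+(\mathrm{Id}\otimes B^+)\Delta(x)$. $\gamma:\mathcal{H}\to\mathcal{H}$ is linear with $\gamma(t_1\cdots t_n)=\delta_{t_1,\bullet}t_2\cdots t_n$ ($\bullet$ the one-vertex tree) and $\gamma(1)=0$. $\langle-,-\rangle$ is the unique bilinear form on $\mathcal{H}$ with $\langle1,x\rangle=\varepsilon(x)$, $\langle xy,z\rangle=\langle y\otimes x,\Delta(z)\rangle$ (with $\langle a\otimes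 b,c\otimes d\rangle=\langle a,c\rangle\langle b,d\rangle$) and $\langle B^+(x),y\rangle=\langle x,\gamma(y)\rangle$; it is symmetric, non-degenerate, and forests of different weights are orthogonal. $(f_F)_F$ is the dual basis of the basis of forests: $f_F\in\mathcal{H}$ with $\langle f_F,G\rangle=\delta_{F,G}$ for all planar forests $G$. *)

theory Defs
  imports Main
begin

text \<open>Planar rooted trees: a root with an ordered (left-to-right) list of subtrees.
  Planar forests are lists of planar trees; the empty list is the empty forest 1.\<close>
datatype ptree = Node "ptree list"

type_synonym forest = "ptree list"

definition dot :: ptree where "dot = Node []"

fun children :: "ptree \<Rightarrow> forest" where "children (Node ts) = ts"

text \<open>Elements of H are finitely supported coefficient functions on forests;
  elements of H \<otimes> H are finitely supported functions on pairs of forests.\<close>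
definition supp :: "('a \<Rightarrow> 'k::zero) \<Rightarrow> 'a set" where
  "supp v = {x. v x \<noteq> 0}"

definition fin :: "('a \<Rightarrow> 'k::zero) \<Rightarrow> bool" where
  "fin v \<longleftrightarrow> finite (supp v)"

definition basis :: "'a \<Rightarrow> ('a \<Rightarrow> 'k::{zero,one})" where
  "basis x = (\<lambda>y. if y = x then 1 else 0)"

definition push :: "('a \<Rightarrow> 'b) \<Rightarrow> ('a \<Rightarrow> 'k::comm_monoid_add) \<Rightarrow> ('b \<Rightarrow> 'k)" where
  "push g v = (\<lambda>y. \<Sum>x\<in>{x. v x \<noteq> 0 \<and> g x = y}. v x)"

definition lin :: "('a \<Rightarrow> ('b \<Rightarrow> 'k::semiring_0)) \<Rightarrow> ('a \<Rightarrow> 'k) \<Rightarrow> ('b \<Rightarrow> 'k)" where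
  "lin \<phi> v = (\<lambda>y. \<Sum>x\<in>supp v. v x * \<phi> x y)"

text \<open>Coproduct on basis forests, following the defining recursion:
  Delta(1) = 1 \<otimes> 1,
  Delta(B+(x)) = B+(x) \<otimes> 1 + (Id \<otimes> B+) Delta(x),
  Delta(xy) = (x \<otimes> 1) Delta(y) + Delta(x)(1 \<otimes> y) - x \<otimes> y  (with x the first tree).\<close>
function deltaB :: "forest \<Rightarrow> (forest \<times> forest \<Rightarrow> 'k::comm_ring_1)" where
  "deltaB [] = basis ([], [])"
| "deltaB [Node ts] =
     (\<lambda>p. basis ([Node ts], []) p + push (\<lambda>(a, b). (a, [Node b])) (deltaB ts) p)"
| "deltaB (t # u # rest) =
     (\<lambda>p. push (\<lambda>(a, b). ([t] @ a, b)) (deltaB (u # rest)) p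
        + push (\<lambda>(a, b). (a, b @ (u # rest))) (deltaB [t]) p
        - basis ([t], u # rest) p)"
  by pat_completeness auto
termination
  by (relation "measure (size_list size)") auto

definition Delta :: "(forest \<Rightarrow> 'k::comm_ring_1) \<Rightarrow> (forest \<times> forest \<Rightarrow> 'k)" where
  "Delta v = lin deltaB v"

definition Bplus :: "(forest \<Rightarrow> 'k::comm_ring_1) \<Rightarrow> (forest \<Rightarrow> 'k)" where
  "Bplus v = push (\<lambda>F. [Node F]) v"

fun gammaB :: "forest \<Rightarrow> (forest \<Rightarrow> 'k::comm_ring_1)" where
  "gammaB [] = (\<lambda>_. 0)"
| "gammaB (t # G) = (if t = dot then basis G else (\<lambda>_. 0))"

definition gamma :: "(forest \<Rightarrow> 'k::comm_ring_1) \<Rightarrow> (forest \<Rightarrow> 'k)" where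
  "gamma v = lin gammaB v"

text \<open>The pairing on basis forests, by the defining recursion in the first argument:
  <1, G> = eps(G), <B+(x), G> = <x, gamma(G)>, <xy, G> = <y \<otimes> x, Delta(G)>
  (with x the first tree of the forest).\<close>
function pairB :: "forest \<Rightarrow> (forest \<Rightarrow> 'k::comm_ring_1)" where
  "pairB [] = (\<lambda>G. if G = [] then 1 else 0)"
| "pairB [Node ts] = (let p = pairB ts in
     (\<lambda>G. (case G of [] \<Rightarrow> 0 | s # G' \<Rightarrow> if s = dot then p G' else 0)))"
| "pairB (t # u # rest) = (let py = pairB (u # rest); px = pairB [t] in
     (\<lambda>G. \<Sum>q\<in>supp (deltaB G :: forest \<times> forest \<Rightarrow> 'k).
            deltaB G q * (py (fst q) * px (snd q))))"
  by pat_completeness auto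
termination
  by (relation "measure (size_list size)") auto

definition pair :: "(forest \<Rightarrow> 'k::comm_ring_1) \<Rightarrow> (forest \<Rightarrow> 'k) \<Rightarrow> 'k" where
  "pair v w = (\<Sum>x\<in>supp v. \<Sum>y\<in>supp w. v x * w y * pairB x y)"

definition fdual :: "forest \<Rightarrow> (forest \<Rightarrow> 'k::field)" where
  "fdual F = (THE v. fin v \<and> (\<forall>G. pair v (basis G) = (if G = F then 1 else 0)))"

end

theory Submission
  imports Defs
begin


fun tsz :: "ptree \<Rightarrow> nat" and fsz :: "forest \<Rightarrow> nat" where
  "tsz (Node ts) = Suc (fsz ts)"
| "fsz [] = 0"
| "fsz (t # ts) = tsz t + fsz ts"

lemma tsz_pos[simp]: "tsz t > 0" by (cases t) auto

lemma fsz_app[simp]: "fsz (x @ z) = fsz x + fsz z" by (induction x) auto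

lemma fsz_0[simp]: "fsz F = 0 \<longleftrightarrow> F = []" by (cases F) auto

fun pre :: "nat \<Rightarrow> forest \<Rightarrow> forest" where
  "pre k [] = []"
| "pre k (Node cs # rest) = (if tsz (Node cs) \<le> k then Node cs # pre (k - tsz (Node cs)) rest else pre k cs)"

fun suf :: "nat \<Rightarrow> forest \<Rightarrow> forest" where
  "suf k [] = []"
| "suf k (Node cs # rest) = (if tsz (Node cs) \<le> k then suf (k - tsz (Node cs)) rest else Node (suf k cs) # rest)"

lemma fsz_pre[simp]: "fsz (pre k F) = min k (fsz F)"
  by (induction k F rule: pre.induct) auto

lemma fsz_suf[simp]: "fsz (suf k F) = fsz F - k"
  by (induction k F rule: suf.induct) auto

lemma pre_all: "fsz F \<le> k \<Longrightarrow> pre k F = F"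
  by (induction k F rule: pre.induct) auto

lemma suf_all: "fsz F \<le> k \<Longrightarrow> suf k F = []"
  by (metis diff_is_0_eq fsz_0 fsz_suf)

lemma pre_0[simp]: "pre 0 F = []"
  by (metis fsz_0 fsz_pre min_0L)

lemma suf_0[simp]: "suf 0 F = F"
  by (induction "0::nat" F rule: suf.induct) auto

lemma pre_app: "pre k (X @ Z) = (if k \<le> fsz X then pre k X else X @ pre (k - fsz X) Z)"
proof (induction k X rule: pre.induct)
  case (1 k) then show ?case by simp
next
  case (2 k cs rest) then show ?case by (auto simp: pre_all)
qed

lemma suf_app: "suf k (X @ Z) = (if k \<le> fsz X then suf k X @ Z else suf (k - fsz X) Z)"
proof (induction k X rule: suf.induct)
  case (1 k) then show ?case by simp
next
  case (2 k cs rest) then show ?case by (auto simp: suf_all)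
qed

lemma pre_cons: "pre k (t # R) = (if k \<le> tsz t then pre k [t] else t # pre (k - tsz t) R)"
  using pre_app[of k "[t]" R] by simp

lemma suf_cons: "suf k (t # R) = (if k \<le> tsz t then suf k [t] @ R else suf (k - tsz t) R)"
  using suf_app[of k "[t]" R] by simp

lemma pre_pre: "i \<le> j \<Longrightarrow> pre i (pre j y) = pre i y"
proof (induction j y arbitrary: i rule: pre.induct)
  case (1 k) then show ?case by simp
next
  case (2 k cs rest) then show ?case by auto
qed

lemma suf_suf: "suf (i + j) y = suf j (suf i y)"
proof (induction i y arbitrary: j rule: suf.induct)
  case (1 k) then show ?case by simp
next
  case (2 k cs rest) then show ?case by (auto simp: add.commute)
qed

lemma suf_pre: "suf i (pre (i + j) y) = pre j (suf i y)"
proof (induction i y arbitrary: j rule: suf.induct)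
  case (1 k) then show ?case by simp
next
  case (2 k cs rest)
  show ?case
  proof (cases "tsz (Node cs) \<le> k")
    case True
    then show ?thesis using 2(1)[OF True, of j] by (simp add: add.commute add.left_commute)
  next
    case False
    show ?thesis
    proof (cases "tsz (Node cs) \<le> k + j")
      case True
      then show ?thesis using False by (auto simp: add.commute)
    next
      case F2: False
      then show ?thesis using False 2(2)[OF False, of j] by auto
    qed
  qed
qed

definition D :: "forest \<Rightarrow> (forest \<times> forest) set" where
  "D G = {(pre k G, suf k G) | k. k \<le> fsz G}"

lemma D_memI: "k \<le> fsz G \<Longrightarrow> (pre k G, suf k G) \<in> D G"
  unfolding D_def by blast

lemma D_memE: "p \<in> D G \<Longrightarrow> (\<And>k. k \<le> fsz G \<Longrightarrow> p = (pre k G, suf k G) \<Longrightarrow> P) \<Longrightarrow> P"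
  unfolding D_def by blast

definition ind :: "'a set \<Rightarrow> 'a \<Rightarrow> 'k::{zero,one}" where
  "ind S = (\<lambda>p. if p \<in> S then 1 else 0)"

lemma push_ind:
  assumes "inj_on g S"
  shows "push g (ind S :: _ \<Rightarrow> 'k::{comm_monoid_add,zero_neq_one}) = ind (g ` S)"
proof
  fix y
  have e: "{x. (ind S x :: 'k) \<noteq> 0 \<and> g x = y} = {x\<in>S. g x = y}" by (auto simp: ind_def)
  show "push g (ind S :: _ \<Rightarrow> 'k) y = ind (g ` S) y"
  proof (cases "y \<in> g ` S")
    case True
    then obtain x where x: "x \<in> S" "y = g x" by auto
    have "{x\<in>S. g x = y} = {x}" using x assms by (auto simp: inj_on_def)
    then show ?thesis using True x unfolding push_def e by (simp add: ind_def)
  next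
    case False
    then have E: "{x\<in>S. g x = y} = {}" by auto
    show ?thesis using False unfolding push_def e E sum.empty by (simp add: ind_def)
  qed
qed

lemma pre_single: "pre k [t] = (if tsz t \<le> k then [t] else pre k (children t))"
  by (cases t) auto

lemma suf_single: "suf k [t] = (if tsz t \<le> k then [] else [Node (suf k (children t))])"
  by (cases t) auto

lemma D_single: "D [Node ts] = insert ([Node ts], []) ((\<lambda>(a,b). (a, [Node b])) ` D ts)"
proof -
  have "D [Node ts] \<subseteq> insert ([Node ts], []) ((\<lambda>(a,b). (a, [Node b])) ` D ts)"
  proof
    fix p assume "p \<in> D [Node ts]"
    then obtain k where k: "k \<le> Suc (fsz ts)" "p = (pre k [Node ts], suf k [Node ts])" by (auto simp: D_def)
    show "p \<in> insert ([Node ts], []) ((\<lambda>(a,b). (a, [Node b])) ` D ts)"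
    proof (cases "k = Suc (fsz ts)")
      case True then show ?thesis using k by auto
    next
      case False
      then have "p = (\<lambda>(a,b). (a, [Node b])) (pre k ts, suf k ts)" "k \<le> fsz ts" using k by auto
      moreover have "(pre k ts, suf k ts) \<in> D ts" using \<open>k \<le> fsz ts\<close> by (rule D_memI)
      ultimately show ?thesis by blast
    qed
  qed
  moreover have "insert ([Node ts], []) ((\<lambda>(a,b). (a, [Node b])) ` D ts) \<subseteq> D [Node ts]"
  proof
    fix p assume "p \<in> insert ([Node ts], []) ((\<lambda>(a,b). (a, [Node b])) ` D ts)"
    then consider "p = ([Node ts], [])" | k where "k \<le> fsz ts" "p = (pre k ts, [Node (suf k ts)])"
      by (auto simp: D_def)
    then show "p \<in> D [Node ts]"
    proof cases
      case 1
      then have "p = (pre (Suc (fsz ts)) [Node ts], suf (Suc (fsz ts)) [Node ts])" by simp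
      moreover have "(pre (Suc (fsz ts)) [Node ts], suf (Suc (fsz ts)) [Node ts]) \<in> D [Node ts]" by (intro D_memI) simp
      ultimately show ?thesis by simp
    next
      case (2 k)
      then have "p = (pre k [Node ts], suf k [Node ts])" by simp
      moreover have "(pre k [Node ts], suf k [Node ts]) \<in> D [Node ts]" using 2 by (intro D_memI) simp
      ultimately show ?thesis by simp
    qed
  qed
  ultimately show ?thesis by blast
qed

lemma D_cons: "D (t # R) = (\<lambda>(a,b). (t#a, b)) ` D R \<union> (\<lambda>(a,b). (a, b @ R)) ` D [t]"
proof -
  have tr: "t # R = [t] @ R" by simp
  show ?thesis
  proof (intro equalityI subsetI)
    fix p assume "p \<in> D (t # R)"
    then obtain k where k: "k \<le> tsz t + fsz R" "p = (pre k (t # R), suf k (t # R))"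
      unfolding D_def by auto
    show "p \<in> (\<lambda>(a,b). (t#a, b)) ` D R \<union> (\<lambda>(a,b). (a, b @ R)) ` D [t]"
    proof (cases "k \<le> tsz t")
      case True
      then have "p = (\<lambda>(a,b). (a, b @ R)) (pre k [t], suf k [t])" using k by (simp add: pre_cons[of _ t R] suf_cons[of _ t R])
      moreover have "(pre k [t], suf k [t]) \<in> D [t]" using True by (intro D_memI) simp
      ultimately show ?thesis by blast
    next
      case False
      then have "p = (\<lambda>(a,b). (t#a, b)) (pre (k - tsz t) R, suf (k - tsz t) R)" using k
        by (simp add: pre_cons[of _ t R] suf_cons[of _ t R])
      moreover have "(pre (k - tsz t) R, suf (k - tsz t) R) \<in> D R" using False k by (intro D_memI) simp
      ultimately show ?thesis by blast
    qed
  next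
    fix p assume "p \<in> (\<lambda>(a,b). (t#a, b)) ` D R \<union> (\<lambda>(a,b). (a, b @ R)) ` D [t]"
    then consider j where "j \<le> fsz R" "p = (t # pre j R, suf j R)"
      | k where "k \<le> tsz t" "p = (pre k [t], suf k [t] @ R)"
      unfolding D_def by auto
    then show "p \<in> D (t # R)"
    proof cases
      case (1 j)
      then have "p = (pre (tsz t + j) (t # R), suf (tsz t + j) (t # R))"
        by (auto simp: pre_cons[of _ t R] suf_cons[of _ t R] pre_all suf_all)
      moreover have "(pre (tsz t + j) (t # R), suf (tsz t + j) (t # R)) \<in> D (t # R)" using 1 by (intro D_memI) simp
      ultimately show ?thesis by simp
    next
      case (2 k)
      then have "p = (pre k (t # R), suf k (t # R))"
        by (auto simp: pre_cons[of _ t R] suf_cons[of _ t R])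
      moreover have "(pre k (t # R), suf k (t # R)) \<in> D (t # R)" using 2 by (intro D_memI) simp
      ultimately show ?thesis by simp
    qed
  qed
qed

lemma D_cons_inter:
  assumes "p \<in> (\<lambda>(a,b). (t#a, b)) ` D R" "p \<in> (\<lambda>(a,b). (a, b @ R)) ` D [t]"
  shows "p = ([t], R)"
proof -
  obtain j where j: "j \<le> fsz R" "p = (t # pre j R, suf j R)" using assms(1) unfolding D_def by auto
  obtain k where k: "k \<le> tsz t" "p = (pre k [t], suf k [t] @ R)" using assms(2) unfolding D_def by auto
  have "fsz (t # pre j R) = fsz (pre k [t])" using j k by simp
  then have "tsz t + j = k" using j k by simp
  then have "j = 0" "k = tsz t" using k by auto
  then show ?thesis using j k by (simp add: pre_all suf_all)
qed

lemma deltaB_ind: "(deltaB G :: _ \<Rightarrow> 'k::comm_ring_1) = ind (D G)"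
proof (induction G rule: deltaB.induct)
  case 1
  have "D [] = {([], [])}" unfolding D_def by auto
  then show ?case by (auto simp: ind_def basis_def)
next
  case (2 ts)
  have inj: "inj_on (\<lambda>(a,b). (a, [Node b])) (D ts)" by (auto simp: inj_on_def)
  have nin: "([Node ts], []) \<notin> (\<lambda>(a,b). (a, [Node b])) ` D ts" by auto
  have "(deltaB [Node ts] :: _ \<Rightarrow> 'k) = (\<lambda>p. basis ([Node ts], []) p + push (\<lambda>(a, b). (a, [Node b])) (deltaB ts) p)"
    by (rule deltaB.simps(2))
  also have "\<dots> = (\<lambda>p. basis ([Node ts], []) p + ind ((\<lambda>(a,b). (a, [Node b])) ` D ts) p)"
    unfolding 2 push_ind[OF inj] ..
  also have "\<dots> = ind (D [Node ts])"
    unfolding D_single using nin by (auto simp: ind_def basis_def)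
  finally show ?case .
next
  case (3 t u rest)
  let ?R = "u # rest"
  have inj1: "inj_on (\<lambda>(a,b). (t#a, b)) (D ?R)" by (auto simp: inj_on_def)
  have inj2: "inj_on (\<lambda>(a,b). (a, b @ ?R)) (D [t])" by (auto simp: inj_on_def)
  have in1: "([t], ?R) \<in> (\<lambda>(a,b). (t#a, b)) ` D ?R"
  proof -
    have "([], ?R) \<in> D ?R" using D_memI[of 0 ?R] by simp
    then show ?thesis by force
  qed
  have in2: "([t], ?R) \<in> (\<lambda>(a,b). (a, b @ ?R)) ` D [t]"
  proof -
    have "([t], []) \<in> D [t]" using D_memI[of "tsz t" "[t]"] by (simp add: pre_all suf_all)
    then show ?thesis by force
  qed
  have "(deltaB (t # u # rest) :: _ \<Rightarrow> 'k) = (\<lambda>p. push (\<lambda>(a, b). ([t] @ a, b)) (deltaB (u # rest)) p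
        + push (\<lambda>(a, b). (a, b @ (u # rest))) (deltaB [t]) p
        - basis ([t], u # rest) p)"
    by (rule deltaB.simps(3))
  also have "\<dots> = (\<lambda>p. ind ((\<lambda>(a,b). (t#a, b)) ` D ?R) p + ind ((\<lambda>(a,b). (a, b @ ?R)) ` D [t]) p
        - basis ([t], u # rest) p)"
    unfolding 3 append.simps push_ind[OF inj1] push_ind[OF inj2] ..
  also have "\<dots> = ind (D (t # ?R))"
    unfolding D_cons[of t ?R]
  proof (rule ext)
    fix p
    let ?A = "(\<lambda>(a,b). (t#a, b)) ` D ?R" and ?B = "(\<lambda>(a,b). (a, b @ ?R)) ` D [t]"
    show "(ind ?A p :: 'k) + ind ?B p - basis ([t], ?R) p = ind (?A \<union> ?B) p"
    proof (cases "p \<in> ?A")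
      case True
      show ?thesis
      proof (cases "p \<in> ?B")
        case True
        then have "p = ([t], ?R)" using D_cons_inter[of p t ?R] \<open>p \<in> ?A\<close> by blast
        then show ?thesis using in1 in2 by (simp add: ind_def basis_def)
      next
        case False
        then have "p \<noteq> ([t], ?R)" using in2 by blast
        then show ?thesis using True False by (simp add: ind_def basis_def)
      qed
    next
      case False
      then have "p \<noteq> ([t], ?R)" using in1 by blast
      then show ?thesis using False by (simp add: ind_def basis_def)
    qed
  qed
  finally show ?case .
qed

lemma supp_ind: "supp (ind S :: _ \<Rightarrow> 'k::zero_neq_one) = S"
  by (auto simp: supp_def ind_def)

lemma ind_D_eval: "(ind (D G) (a, b) :: 'k::zero_neq_one) = (if \<exists>k\<le>fsz G. a = pre k G \<and> b = suf k G then 1 else 0)"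
  by (auto simp: ind_def D_def)

lemma D_eq_image: "D G = (\<lambda>k. (pre k G, suf k G)) ` {..fsz G}"
  unfolding D_def by auto

lemma inj_D: "inj_on (\<lambda>k. (pre k G, suf k G)) {..fsz G}"
proof (rule inj_onI)
  fix i j assume "i \<in> {..fsz G}" "j \<in> {..fsz G}" "(pre i G, suf i G) = (pre j G, suf j G)"
  then have "fsz (pre i G) = fsz (pre j G)" by simp
  then show "i = j" using \<open>i \<in> {..fsz G}\<close> \<open>j \<in> {..fsz G}\<close> by simp
qed

lemma pairB_nil: "pairB [] G = (if G = [] then 1 else 0)"
  by simp

lemma pairB_node: "pairB [Node a] G = (case G of [] \<Rightarrow> 0 | s # G' \<Rightarrow> if s = dot then pairB a G' else 0)"
  by (simp add: Let_def)

lemma pairB_cons_sum: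
  "(pairB (t # u # rest) G :: 'k::comm_ring_1) = (\<Sum>k\<in>{..fsz G}. pairB (u # rest) (pre k G) * pairB [t] (suf k G))"
proof -
  have "(pairB (t # u # rest) G :: 'k) = (\<Sum>q\<in>supp (deltaB G :: forest \<times> forest \<Rightarrow> 'k).
            deltaB G q * (pairB (u # rest) (fst q) * pairB [t] (snd q)))"
    by (simp add: Let_def)
  also have "\<dots> = (\<Sum>q\<in>D G. pairB (u # rest) (fst q) * pairB [t] (snd q))"
    unfolding deltaB_ind supp_ind by (intro sum.cong) (auto simp: ind_def)
  also have "\<dots> = (\<Sum>k\<in>{..fsz G}. pairB (u # rest) (pre k G) * pairB [t] (suf k G))"
    unfolding D_eq_image by (subst sum.reindex[OF inj_D]) simp
  finally show ?thesis .
qed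

lemma fsz_dot[simp]: "tsz dot = 1" by (simp add: dot_def)

lemma pairB_grade: "(pairB x G :: 'k::comm_ring_1) \<noteq> 0 \<Longrightarrow> fsz x = fsz G"
proof (induction "fsz x" arbitrary: x G rule: less_induct)
  case less
  show ?case
  proof (cases x)
    case Nil then show ?thesis using less.prems by (simp split: if_splits)
  next
    case (Cons t R)
    show ?thesis
    proof (cases R)
      case Nil
      obtain ts where t: "t = Node ts" by (cases t)
      obtain s G' where G: "G = s # G'" "s = dot" "(pairB ts G' :: 'k) \<noteq> 0"
        using less.prems unfolding Cons Nil t by (auto simp: pairB_node split: list.splits if_splits)
      have "fsz ts = fsz G'" using less.hyps[OF _ G(3)] Cons Nil t by simp
      then show ?thesis using G Cons Nil t by simp
    next
      case (Cons u rest)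
      obtain k where k: "k \<in> {..fsz G}" "(pairB (u # rest) (pre k G) * pairB [t] (suf k G) :: 'k) \<noteq> 0"
        using less.prems unfolding \<open>x = t # R\<close> Cons pairB_cons_sum by (meson sum.not_neutral_contains_not_neutral)
      then have a: "(pairB (u # rest) (pre k G) :: 'k) \<noteq> 0" and b: "(pairB [t] (suf k G) :: 'k) \<noteq> 0" by auto
      have "fsz (u # rest) = k" using less.hyps[OF _ a] k \<open>x = t # R\<close> Cons by simp
      moreover have "fsz [t] = fsz G - k" using less.hyps[OF _ b] \<open>x = t # R\<close> Cons by simp
      ultimately show ?thesis using k \<open>x = t # R\<close> Cons by simp
    qed
  qed
qed

lemma pairB_zero: "fsz x \<noteq> fsz G \<Longrightarrow> (pairB x G :: 'k::comm_ring_1) = 0"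
  using pairB_grade by blast

lemma pairB_nil_right: "(pairB a [] :: 'k::comm_ring_1) = (if a = [] then 1 else 0)"
  using pairB_zero[of a "[]"] by auto

lemma pairB_cons:
  "(pairB (t # R) G :: 'k::comm_ring_1) = pairB R (pre (fsz R) G) * pairB [t] (suf (fsz R) G)"
proof (cases R)
  case Nil then show ?thesis by simp
next
  case (Cons u rest)
  show ?thesis
  proof (cases "fsz R \<le> fsz G")
    case True
    have "(pairB (t # R) G :: 'k) = (\<Sum>k\<in>{..fsz G}. pairB R (pre k G) * pairB [t] (suf k G))"
      unfolding Cons pairB_cons_sum ..
    also have "\<dots> = (\<Sum>k\<in>{..fsz G}. if k = fsz R then pairB R (pre k G) * pairB [t] (suf k G) else 0)"
      by (intro sum.cong) (auto simp: pairB_zero)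
    also have "\<dots> = pairB R (pre (fsz R) G) * pairB [t] (suf (fsz R) G)"
      using True by simp
    finally show ?thesis .
  next
    case False
    have "(pairB (t # R) G :: 'k) = (\<Sum>k\<in>{..fsz G}. pairB R (pre k G) * pairB [t] (suf k G))"
      unfolding Cons pairB_cons_sum ..
    also have "\<dots> = 0"
      using False by (intro sum.neutral) (auto simp: pairB_zero)
    finally show ?thesis using False by (simp add: pre_all pairB_zero)
  qed
qed

lemma pairB_app:
  "(pairB (x @ z) y :: 'k::comm_ring_1) = pairB z (pre (fsz z) y) * pairB x (suf (fsz z) y)"
proof (induction x arbitrary: y)
  case Nil
  show ?case
  proof (cases "fsz y = fsz z")
    case True then show ?thesis by (simp add: pre_all suf_all)
  next
    case False
    show ?thesis
    proof (cases "fsz y < fsz z")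
      case True then show ?thesis using False by (simp add: pre_all pairB_zero)
    next
      case F2: False
      then have "fsz (suf (fsz z) y) \<noteq> 0" using False by simp
      then have "suf (fsz z) y \<noteq> []" by (metis fsz_0)
      then show ?thesis using False by (simp add: pairB_nil pairB_zero)
    qed
  qed
next
  case (Cons t x')
  let ?Y = "suf (fsz z) y"
  have e1: "pre (fsz z) (pre (fsz z + fsz x') y) = pre (fsz z) y" by (rule pre_pre) simp
  have e2: "suf (fsz z) (pre (fsz z + fsz x') y) = pre (fsz x') ?Y" by (rule suf_pre)
  have e3: "suf (fsz z + fsz x') y = suf (fsz x') ?Y" by (rule suf_suf)
  have "(pairB ((t # x') @ z) y :: 'k) = pairB (x' @ z) (pre (fsz z + fsz x') y) * pairB [t] (suf (fsz z + fsz x') y)"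
    using pairB_cons[of t "x' @ z" y] by (simp add: add.commute)
  also have "\<dots> = pairB z (pre (fsz z) y) * pairB x' (pre (fsz x') ?Y) * pairB [t] (suf (fsz x') ?Y)"
    using Cons[of "pre (fsz z + fsz x') y"] unfolding e1 e2 e3 by simp
  also have "\<dots> = pairB z (pre (fsz z) y) * pairB (t # x') ?Y"
    unfolding pairB_cons[of t x' ?Y] by (simp add: mult.assoc)
  finally show ?case .
qed

lemma min_lt_tsz[simp]: "min a n < tsz r + n" "min a n < n + tsz r"
  using tsz_pos[of r] min.cobounded2[of a n] by linarith+

lemma fsz_pos_cons: "fsz (t # x) > 0" by simp

lemma pairB_rp:
  "(pairB x (X @ Z) :: 'k::comm_ring_1) = pairB (pre (fsz Z) x) Z * pairB (suf (fsz Z) x) X"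
proof (induction "fsz x" arbitrary: x X Z rule: less_induct)
  case less
  show ?case
  proof (cases "fsz x = fsz X + fsz Z")
    case False
    have l: "(pairB x (X @ Z) :: 'k) = 0" using False by (simp add: pairB_zero)
    have r: "(pairB (pre (fsz Z) x) Z * pairB (suf (fsz Z) x) X :: 'k) = 0"
    proof (rule ccontr)
      assume "\<not> ?thesis"
      then have "(pairB (pre (fsz Z) x) Z :: 'k) \<noteq> 0" "(pairB (suf (fsz Z) x) X :: 'k) \<noteq> 0" by auto
      from pairB_grade[OF this(1)] pairB_grade[OF this(2)] have "fsz x = fsz X + fsz Z" by simp
      then show False using False by simp
    qed
    show ?thesis using l r by simp
  next
    case sz: True
    show ?thesis
    proof (cases x)
      case Nil then show ?thesis by simp
    next
      case (Cons r x')
      show ?thesis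
      proof (cases x')
        case Nil
        obtain a where r: "r = Node a" by (cases r)
        have xa: "x = [Node a]" using Cons Nil r by simp
        show ?thesis
        proof (cases X)
          case Nil
          then show ?thesis using sz by (simp add: pre_all suf_all)
        next
          case (Cons s X')
          have "fsz X = tsz s + fsz X'" "fsz x = Suc (fsz a)" using xa Cons by auto
          then have szZ: "fsz Z \<le> fsz a" using sz tsz_pos[of s] by linarith
          then have pz: "pre (fsz Z) x = pre (fsz Z) a" and sfz: "suf (fsz Z) x = [Node (suf (fsz Z) a)]"
            using xa by auto
          have "(pairB x (X @ Z) :: 'k) = (if s = dot then pairB a (X' @ Z) else 0)"
            using xa Cons by (simp add: pairB_node)
          also have "\<dots> = (if s = dot then pairB (pre (fsz Z) a) Z * pairB (suf (fsz Z) a) X' else 0)"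
            using less.hyps[of a X' Z] xa by simp
          also have "\<dots> = pairB (pre (fsz Z) x) Z * pairB (suf (fsz Z) x) X"
            unfolding pz sfz Cons pairB_node by simp
          finally show ?thesis .
        qed
      next
        case (Cons u rest)
        let ?m = "fsz x'"
        have xr: "x = r # x'" using \<open>x = r # x'\<close> .
        have hx': "fsz x' < fsz x" using xr by simp
        have hr: "fsz [r] < fsz x" using xr Cons by simp
        have L: "(pairB x (X @ Z) :: 'k) = pairB x' (pre ?m (X @ Z)) * pairB [r] (suf ?m (X @ Z))"
          unfolding xr by (rule pairB_cons)
        show ?thesis
        proof (cases "?m \<le> fsz X")
          case True
          have Zr: "fsz Z \<le> tsz r" using sz xr True by simp
          have e1: "pre ?m (X @ Z) = pre ?m X" "suf ?m (X @ Z) = suf ?m X @ Z"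
            using True by (auto simp: pre_app suf_app)
          have e2: "pre (fsz Z) x = pre (fsz Z) [r]" "suf (fsz Z) x = suf (fsz Z) [r] @ x'"
            using Zr xr by (auto simp: pre_cons[of _ r x'] suf_cons[of _ r x'])
          have "(pairB x (X @ Z) :: 'k) = pairB x' (pre ?m X) * pairB [r] (suf ?m X @ Z)"
            unfolding L e1 ..
          also have "\<dots> = pairB x' (pre ?m X) * (pairB (pre (fsz Z) [r]) Z * pairB (suf (fsz Z) [r]) (suf ?m X))"
            using less.hyps[OF hr, of "suf ?m X" Z] by simp
          also have "\<dots> = pairB (pre (fsz Z) x) Z * pairB (suf (fsz Z) x) X"
            unfolding e2 pairB_app[of "suf (fsz Z) [r]" x' X] by (simp add: ac_simps)
          finally show ?thesis .
        next
          case False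
          let ?j = "?m - fsz X"
          have Zr: "fsz Z = tsz r + ?j" "tsz r < fsz Z" using sz xr False by auto
          have e1: "pre ?m (X @ Z) = X @ pre ?j Z" "suf ?m (X @ Z) = suf ?j Z"
            using False by (auto simp: pre_app suf_app)
          have e2: "pre (fsz Z) x = r # pre ?j x'" "suf (fsz Z) x = suf ?j x'"
            using Zr xr by (auto simp: pre_cons[of _ r x'] suf_cons[of _ r x'])
          have fj: "fsz (pre ?j Z) = ?j" "fsz (pre ?j x') = ?j" using Zr False by auto
          have "(pairB x (X @ Z) :: 'k) = pairB x' (X @ pre ?j Z) * pairB [r] (suf ?j Z)"
            unfolding L e1 ..
          also have "\<dots> = pairB (pre ?j x') (pre ?j Z) * pairB (suf ?j x') X * pairB [r] (suf ?j Z)"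
            using less.hyps[OF hx', of X "pre ?j Z"] unfolding fj by simp
          also have "\<dots> = pairB (pre (fsz Z) x) Z * pairB (suf (fsz Z) x) X"
            unfolding e2 pairB_cons[of r "pre ?j x'" Z] fj by (simp add: ac_simps)
          finally show ?thesis .
        qed
      qed
    qed
  qed
qed

lemma pairB_sym: "(pairB x y :: 'k::comm_ring_1) = pairB y x"
proof (induction "fsz x + fsz y" arbitrary: x y rule: less_induct)
  case less
  show ?case
  proof (cases "\<exists>r x'. x = r # x' \<and> x' \<noteq> []")
    case True
    then obtain r x' where x: "x = r # x'" "x' \<noteq> []" by blast
    have p: "fsz x' > 0" using x(2) fsz_0 by (metis neq0_conv)
    have "(pairB x y :: 'k) = pairB x' (pre (fsz x') y) * pairB [r] (suf (fsz x') y)"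
      unfolding x by (rule pairB_cons)
    also have "\<dots> = pairB (pre (fsz x') y) x' * pairB (suf (fsz x') y) [r]"
    proof -
      have h1: "(pairB x' (pre (fsz x') y) :: 'k) = pairB (pre (fsz x') y) x'"
        by (intro less.hyps) (use p in \<open>simp add: x(1)\<close>)
      have h2: "(pairB [r] (suf (fsz x') y) :: 'k) = pairB (suf (fsz x') y) [r]"
        by (intro less.hyps) (use p in \<open>simp add: x(1)\<close>)
      show ?thesis unfolding h1 h2 ..
    qed
    also have "\<dots> = pairB y ([r] @ x')" by (rule pairB_rp[symmetric])
    finally show ?thesis using x by simp
  next
    case F1: False
    show ?thesis
    proof (cases "\<exists>s y'. y = s # y' \<and> y' \<noteq> []")
      case True
      then obtain s y' where y: "y = s # y'" "y' \<noteq> []" by blast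
      have p: "fsz y' > 0" using y(2) fsz_0 by (metis neq0_conv)
      have "(pairB y x :: 'k) = pairB y' (pre (fsz y') x) * pairB [s] (suf (fsz y') x)"
        unfolding y by (rule pairB_cons)
      also have "\<dots> = pairB (pre (fsz y') x) y' * pairB (suf (fsz y') x) [s]"
      proof -
        have h1: "(pairB y' (pre (fsz y') x) :: 'k) = pairB (pre (fsz y') x) y'"
          by (intro less.hyps[symmetric]) (use p in \<open>simp add: y(1)\<close>)
        have h2: "(pairB [s] (suf (fsz y') x) :: 'k) = pairB (suf (fsz y') x) [s]"
          by (intro less.hyps[symmetric]) (use p in \<open>simp add: y(1)\<close>)
        show ?thesis unfolding h1 h2 ..
      qed
      also have "\<dots> = pairB x ([s] @ y')" by (rule pairB_rp[symmetric])
      finally show ?thesis using y by simp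
    next
      case F2: False
      have hx: "x = [] \<or> (\<exists>a. x = [Node a])" using F1
        by (metis list.exhaust ptree.exhaust)
      have hy: "y = [] \<or> (\<exists>b. y = [Node b])" using F2
        by (metis list.exhaust ptree.exhaust)
      show ?thesis using hx hy
        by (auto simp: pairB_node pairB_nil_right dot_def)
    qed
  qed
qed



definition Phi :: "(forest \<Rightarrow> 'k::field) \<Rightarrow> forest \<Rightarrow> 'k" where
  "Phi v G = (\<Sum>x\<in>supp v. v x * pairB x G)"

lemma supp_basis: "supp (basis G :: _ \<Rightarrow> 'k::zero_neq_one) = {G}"
  by (auto simp: supp_def basis_def)

lemma pair_basis: "pair v (basis G :: _ \<Rightarrow> 'k::field) = Phi v G"
  unfolding pair_def Phi_def supp_basis by (simp add: basis_def)

lemma Phi_super: "finite S \<Longrightarrow> supp v \<subseteq> S \<Longrightarrow> Phi v G = (\<Sum>x\<in>S. v x * pairB x G)"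
  unfolding Phi_def by (rule sum.mono_neutral_left) (auto simp: supp_def)

lemma finite_Fs: "finite {F. fsz F \<le> n}"
proof (induction n)
  case 0
  have "{F. fsz F \<le> 0} = {[]}" by auto
  then show ?case by simp
next
  case (Suc n)
  have "{F. fsz F \<le> Suc n} \<subseteq> insert [] ((\<lambda>(cs, rest). Node cs # rest) ` ({F. fsz F \<le> n} \<times> {F. fsz F \<le> n}))"
  proof
    fix F assume F: "F \<in> {F. fsz F \<le> Suc n}"
    show "F \<in> insert [] ((\<lambda>(cs, rest). Node cs # rest) ` ({F. fsz F \<le> n} \<times> {F. fsz F \<le> n}))"
    proof (cases F)
      case Nil then show ?thesis by simp
    next
      case (Cons t rest)
      obtain cs where t: "t = Node cs" by (cases t)
      have "(cs, rest) \<in> {F. fsz F \<le> n} \<times> {F. fsz F \<le> n}" using F Cons t by auto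
      then show ?thesis using Cons t by force
    qed
  qed
  moreover have "finite (insert [] ((\<lambda>(cs, rest). Node cs # rest) ` ({F. fsz F \<le> n} \<times> {F. fsz F \<le> n})))"
    using Suc by simp
  ultimately show ?case by (rule finite_subset)
qed

definition inS :: "(forest \<Rightarrow> 'k::field) \<Rightarrow> bool" where
  "inS \<phi> \<longleftrightarrow> (\<exists>v. fin v \<and> Phi v = \<phi>)"

lemma inS_zero: "inS (\<lambda>_. 0)"
  unfolding inS_def by (rule exI[of _ "\<lambda>_. 0"]) (auto simp: fin_def supp_def Phi_def)

lemma inS_add:
  assumes "inS \<phi>" "inS \<psi>" shows "inS (\<lambda>G. \<phi> G + \<psi> G)"
proof -
  obtain v w where v: "fin v" "Phi v = \<phi>" and w: "fin w" "Phi w = \<psi>" using assms unfolding inS_def by blast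
  let ?S = "supp v \<union> supp w"
  have f: "finite ?S" using v w by (simp add: fin_def)
  have s: "supp (\<lambda>x. v x + w x) \<subseteq> ?S" by (auto simp: supp_def)
  have "fin (\<lambda>x. v x + w x)" using f s finite_subset unfolding fin_def by blast
  moreover have "Phi (\<lambda>x. v x + w x) = (\<lambda>G. \<phi> G + \<psi> G)"
  proof
    fix G
    have "Phi (\<lambda>x. v x + w x) G = (\<Sum>x\<in>?S. (v x + w x) * pairB x G)" by (rule Phi_super[OF f s])
    also have "\<dots> = (\<Sum>x\<in>?S. v x * pairB x G) + (\<Sum>x\<in>?S. w x * pairB x G)"
      by (simp add: distrib_right sum.distrib)
    also have "\<dots> = Phi v G + Phi w G"
      using Phi_super[OF f, of v G] Phi_super[OF f, of w G] by simp
    finally show "Phi (\<lambda>x. v x + w x) G = \<phi> G + \<psi> G" using v w by simp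
  qed
  ultimately show ?thesis unfolding inS_def by blast
qed

lemma inS_scale:
  assumes "inS \<phi>" shows "inS (\<lambda>G. c * \<phi> G)"
proof -
  obtain v where v: "fin v" "Phi v = \<phi>" using assms unfolding inS_def by blast
  have s: "supp (\<lambda>x. c * v x) \<subseteq> supp v" by (auto simp: supp_def)
  have f: "finite (supp v)" using v by (simp add: fin_def)
  have "fin (\<lambda>x. c * v x)" using f s finite_subset unfolding fin_def by blast
  moreover have "Phi (\<lambda>x. c * v x) = (\<lambda>G. c * \<phi> G)"
  proof
    fix G
    have "Phi (\<lambda>x. c * v x) G = (\<Sum>x\<in>supp v. (c * v x) * pairB x G)" by (rule Phi_super[OF f s])
    also have "\<dots> = c * Phi v G" unfolding Phi_def by (simp add: sum_distrib_left mult.assoc)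
    finally show "Phi (\<lambda>x. c * v x) G = c * \<phi> G" using v by simp
  qed
  ultimately show ?thesis unfolding inS_def by blast
qed

lemma inS_diff:
  assumes "inS \<phi>" "inS \<psi>" shows "inS (\<lambda>G. \<phi> G - \<psi> G)"
  using inS_add[OF assms(1) inS_scale[OF assms(2), of "-1"]] by simp

lemma inS_sum:
  assumes "finite T" "\<And>H. H \<in> T \<Longrightarrow> inS (f H)"
  shows "inS (\<lambda>G. \<Sum>H\<in>T. f H G)"
  using assms
proof (induction T rule: finite_induct)
  case empty then show ?case by (simp add: inS_zero)
next
  case (insert a T)
  then show ?case using inS_add[of "f a" "\<lambda>G. \<Sum>H\<in>T. f H G"] by simp
qed

definition Bp :: "(forest \<Rightarrow> 'k::field) \<Rightarrow> forest \<Rightarrow> 'k" where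
  "Bp v y = (if \<exists>F. y = [Node F] then v (children (hd y)) else 0)"

lemma Bplus_Bp: "Bplus v = Bp v"
proof
  fix y
  show "Bplus v y = Bp v y"
  proof (cases "\<exists>F. y = [Node F]")
    case True
    then obtain F where y: "y = [Node F]" by blast
    have "{x. v x \<noteq> 0 \<and> [Node x] = y} = (if v F = 0 then {} else {F})" using y by auto
    then show ?thesis unfolding Bplus_def push_def Bp_def using y by auto
  next
    case False
    then have E: "{x. v x \<noteq> 0 \<and> [Node x] = y} = {}" by auto
    show ?thesis unfolding Bplus_def push_def Bp_def E using False by simp
  qed
qed

lemma supp_Bp: "supp (Bp v) = (\<lambda>F. [Node F]) ` supp v"
  by (auto simp: supp_def Bp_def)

lemma fin_Bp: "fin v \<Longrightarrow> fin (Bp v)"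
  unfolding fin_def supp_Bp by simp

lemma Phi_Bp: "fin v \<Longrightarrow> Phi (Bp v) G = (case G of [] \<Rightarrow> 0 | s # G' \<Rightarrow> if s = dot then Phi v G' else 0)"
proof -
  have inj: "inj_on (\<lambda>F. [Node F]) (supp v)" by (auto simp: inj_on_def)
  have "Phi (Bp v) G = (\<Sum>F\<in>supp v. v F * pairB [Node F] G)"
    unfolding Phi_def supp_Bp sum.reindex[OF inj] by (simp add: Bp_def)
  also have "\<dots> = (case G of [] \<Rightarrow> 0 | s # G' \<Rightarrow> if s = dot then Phi v G' else 0)"
    unfolding pairB_node Phi_def by (cases G) auto
  finally show ?thesis .
qed

lemma inS_L: "inS \<phi> \<Longrightarrow> inS (\<lambda>G. case G of [] \<Rightarrow> 0 | s # G' \<Rightarrow> if s = dot then \<phi> G' else 0)"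
  unfolding inS_def using fin_Bp Phi_Bp by fastforce

lemma pairB_app_sum:
  "(pairB (x @ z) G :: 'k::comm_ring_1) = (\<Sum>k\<in>{..fsz G}. pairB z (pre k G) * pairB x (suf k G))"
proof (cases "fsz z \<le> fsz G")
  case True
  have "(\<Sum>k\<in>{..fsz G}. pairB z (pre k G) * pairB x (suf k G) :: 'k)
      = (\<Sum>k\<in>{..fsz G}. if k = fsz z then pairB z (pre k G) * pairB x (suf k G) else 0)"
    by (intro sum.cong) (auto simp: pairB_zero)
  also have "\<dots> = pairB z (pre (fsz z) G) * pairB x (suf (fsz z) G)"
  proof -
    have m: "fsz z \<in> {..fsz G}" using True by simp
    show ?thesis by (simp only: sum.delta[OF finite_atMost] m if_True)
  qed
  also have "\<dots> = pairB (x @ z) G" by (rule pairB_app[symmetric])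
  finally show ?thesis ..
next
  case False
  have "(\<Sum>k\<in>{..fsz G}. pairB z (pre k G) * pairB x (suf k G) :: 'k) = 0"
    using False by (intro sum.neutral) (auto simp: pairB_zero)
  moreover have "(pairB (x @ z) G :: 'k) = 0"
  proof -
    have "pre (fsz z) G = G" using False by (simp add: pre_all)
    then have "(pairB z (pre (fsz z) G) :: 'k) = 0" using False by (simp add: pairB_zero)
    then show ?thesis by (simp only: pairB_app mult_zero_left)
  qed
  ultimately show ?thesis by simp
qed

definition conv :: "(forest \<Rightarrow> 'k::field) \<Rightarrow> (forest \<Rightarrow> 'k) \<Rightarrow> forest \<Rightarrow> 'k" where
  "conv v w F = (\<Sum>q\<in>supp w \<times> supp v. if fst q @ snd q = F then v (snd q) * w (fst q) else 0)"

lemma Phi_conv: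
  assumes v: "fin v" and w: "fin w"
  shows "fin (conv v w)" "Phi (conv v w) G = (\<Sum>k\<in>{..fsz G}. Phi v (pre k G) * Phi w (suf k G))"
proof -
  let ?Q = "supp w \<times> supp v"
  let ?I = "(\<lambda>q. fst q @ snd q) ` ?Q"
  have fQ: "finite ?Q" using v w by (simp add: fin_def)
  have fI: "finite ?I" using fQ by simp
  have sI: "supp (conv v w) \<subseteq> ?I"
  proof
    fix F assume "F \<in> supp (conv v w)"
    then have "conv v w F \<noteq> 0" by (simp add: supp_def)
    then obtain q where "q \<in> ?Q" "(if fst q @ snd q = F then v (snd q) * w (fst q) else 0) \<noteq> 0"
      unfolding conv_def using sum.not_neutral_contains_not_neutral by blast
    then show "F \<in> ?I" by (auto split: if_splits)
  qed
  show "fin (conv v w)" using fI sI finite_subset unfolding fin_def by blast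
  have "Phi (conv v w) G = (\<Sum>F\<in>?I. conv v w F * pairB F G)" by (rule Phi_super[OF fI sI])
  also have "\<dots> = (\<Sum>F\<in>?I. \<Sum>q\<in>?Q. if fst q @ snd q = F then v (snd q) * w (fst q) * pairB F G else 0)"
    unfolding conv_def sum_distrib_right by (intro sum.cong) auto
  also have "\<dots> = (\<Sum>q\<in>?Q. \<Sum>F\<in>?I. if fst q @ snd q = F then v (snd q) * w (fst q) * pairB F G else 0)"
    by (rule sum.swap)
  also have "\<dots> = (\<Sum>q\<in>?Q. v (snd q) * w (fst q) * pairB (fst q @ snd q) G)"
    using fI by (intro sum.cong) auto
  also have "\<dots> = (\<Sum>q\<in>?Q. \<Sum>k\<in>{..fsz G}. (w (fst q) * pairB (fst q) (suf k G)) * (v (snd q) * pairB (snd q) (pre k G)))"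
    unfolding pairB_app_sum sum_distrib_left by (intro sum.cong) (auto simp: ac_simps)
  also have "\<dots> = (\<Sum>k\<in>{..fsz G}. \<Sum>q\<in>?Q. (w (fst q) * pairB (fst q) (suf k G)) * (v (snd q) * pairB (snd q) (pre k G)))"
    by (rule sum.swap)
  also have "\<dots> = (\<Sum>k\<in>{..fsz G}. Phi w (suf k G) * Phi v (pre k G))"
  proof (intro sum.cong refl)
    fix k
    show "(\<Sum>q\<in>?Q. (w (fst q) * pairB (fst q) (suf k G)) * (v (snd q) * pairB (snd q) (pre k G)))
        = Phi w (suf k G) * Phi v (pre k G)"
      unfolding Phi_def sum_product sum.cartesian_product by (simp add: case_prod_beta)
  qed
  finally show "Phi (conv v w) G = (\<Sum>k\<in>{..fsz G}. Phi v (pre k G) * Phi w (suf k G))"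
    by (simp add: mult.commute)
qed

lemma inS_conv:
  assumes "inS \<phi>" "inS \<psi>"
  shows "inS (\<lambda>G. \<Sum>k\<in>{..fsz G}. \<phi> (pre k G) * \<psi> (suf k G))"
proof -
  obtain v w where v: "fin v" "Phi v = \<phi>" and w: "fin w" "Phi w = \<psi>" using assms unfolding inS_def by blast
  show ?thesis unfolding inS_def
    using Phi_conv[OF v(1) w(1)] v(2) w(2) by (intro exI[of _ "conv v w"]) auto
qed

fun fts :: "forest \<Rightarrow> nat" where
  "fts [] = 0"
| "fts (t # _) = tsz t"

lemma inS_basis_nil: "inS (basis [] :: forest \<Rightarrow> 'k::field)"
proof -
  have "Phi (basis [] :: forest \<Rightarrow> 'k) = basis []"
  proof
    fix G show "Phi (basis [] :: forest \<Rightarrow> 'k) G = basis [] G"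
      unfolding Phi_def supp_basis by (simp add: basis_def)
  qed
  moreover have "fin (basis [] :: forest \<Rightarrow> 'k)" unfolding fin_def supp_basis by simp
  ultimately show ?thesis unfolding inS_def by blast
qed

lemma conv_basis_val:
  fixes cs z'' :: forest
  assumes cs: "cs \<noteq> []"
  defines "\<phi> \<equiv> (\<lambda>G. \<Sum>k\<in>{..fsz G}. (basis cs (pre k G) :: 'k::field) * basis (dot # z'') (suf k G))"
  shows "\<phi> (Node cs # z'') = 1"
    and "\<phi> G \<noteq> 0 \<Longrightarrow> fsz G = fsz (Node cs # z'') \<and> (G = Node cs # z'' \<or> fts G < fts (Node cs # z''))"
proof -
  let ?z = "Node cs # z''"
  have pz: "pre (fsz cs) ?z = cs"
    using pre_cons[of "fsz cs" "Node cs" z''] by (simp add: pre_all)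
  have sz: "suf (fsz cs) ?z = dot # z''"
    using suf_cons[of "fsz cs" "Node cs" z''] by (simp add: suf_all dot_def)
  have "\<phi> ?z = (\<Sum>k\<in>{..fsz ?z}. if k = fsz cs then 1 else 0)"
    unfolding \<phi>_def
  proof (intro sum.cong refl)
    fix k assume k: "k \<in> {..fsz ?z}"
    show "(basis cs (pre k ?z) :: 'k) * basis (dot # z'') (suf k ?z) = (if k = fsz cs then 1 else 0)"
    proof (cases "k = fsz cs")
      case True then show ?thesis using pz sz by (simp add: basis_def)
    next
      case False
      have "pre k ?z \<noteq> cs"
      proof
        assume "pre k ?z = cs"
        then have "min k (fsz ?z) = fsz cs" by (metis fsz_pre)
        then show False using False k by (auto simp: min_def split: if_splits)
      qed
      then show ?thesis using False by (simp add: basis_def)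
    qed
  qed
  also have "\<dots> = 1" by simp
  finally show "\<phi> ?z = 1" .
next
  let ?z = "Node cs # z''"
  assume "\<phi> G \<noteq> 0"
  then obtain k where k: "k \<in> {..fsz G}" "(basis cs (pre k G) :: 'k) * basis (dot # z'') (suf k G) \<noteq> 0"
    unfolding \<phi>_def using sum.not_neutral_contains_not_neutral by blast
  then have pk: "pre k G = cs" and sk: "suf k G = dot # z''" by (auto simp: basis_def split: if_splits)
  have f1: "min k (fsz G) = fsz cs" using pk by (metis fsz_pre)
  have f2: "fsz G - k = Suc (fsz z'')" using sk fsz_suf[of k G] by (simp add: dot_def)
  have kk: "k = fsz cs" "fsz G = fsz cs + Suc (fsz z'')" using f1 f2 k by (auto simp: min_def split: if_splits)
  show "fsz G = fsz ?z \<and> (G = ?z \<or> fts G < fts ?z)"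
  proof
    show "fsz G = fsz ?z" using kk by simp
  next
    obtain d rest where G: "G = Node d # rest"
      using kk by (cases G) (auto, metis ptree.exhaust)
    show "G = ?z \<or> fts G < fts ?z"
    proof (cases "tsz (Node d) \<le> k")
      case True
      then show ?thesis using G kk by auto
    next
      case False
      have a: "pre k d = cs" using pk G False by simp
      have b: "suf k d = [] \<and> rest = z''" using sk G False by (simp add: dot_def)
      have "fsz d \<le> k" using b fsz_suf[of k d] by simp
      then have "d = cs" using a by (simp add: pre_all)
      then show ?thesis using G b by simp
    qed
  qed
qed

lemma exist_aux: "\<forall>z. fsz z = n \<longrightarrow> fts z = m \<longrightarrow> inS (basis z :: forest \<Rightarrow> 'k::field)"
proof (induction n arbitrary: m rule: less_induct)
  case (less n)
  note outer = less.IH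
  have ob: "inS (basis y :: forest \<Rightarrow> 'k)" if "fsz y < n" for y
    using outer[OF that, of "fts y"] by blast
  show ?case
  proof (induction m rule: less_induct)
    case (less m)
    note inner = less.IH
    show ?case
    proof (intro allI impI)
      fix z assume z: "fsz z = n" "fts z = m"
      show "inS (basis z :: forest \<Rightarrow> 'k)"
      proof (cases z)
        case Nil then show ?thesis by (simp add: inS_basis_nil)
      next
        case (Cons t z'')
        obtain cs where t: "t = Node cs" by (cases t)
        show ?thesis
        proof (cases "cs = []")
          case True
          have "fsz z = tsz t + fsz z''" using Cons by simp
          then have "fsz z'' < n" using z tsz_pos[of t] by linarith
          then have h: "inS (basis z'' :: forest \<Rightarrow> 'k)" by (rule ob)
          have "basis z = (\<lambda>G. case G of [] \<Rightarrow> 0 | s # G' \<Rightarrow> if s = dot then (basis z'' :: forest \<Rightarrow> 'k) G' else 0)"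
          proof
            fix G show "(basis z :: forest \<Rightarrow> 'k) G = (case G of [] \<Rightarrow> 0 | s # G' \<Rightarrow> if s = dot then basis z'' G' else 0)"
              using Cons t True by (cases G) (auto simp: basis_def dot_def)
          qed
          then show ?thesis using inS_L[OF h] by simp
        next
          case False
          define \<phi> where "\<phi> \<equiv> (\<lambda>G. \<Sum>k\<in>{..fsz G}. (basis cs (pre k G) :: 'k) * basis (dot # z'') (suf k G))"
          have zz: "z = Node cs # z''" using Cons t by simp
          have p1: "\<phi> z = 1" unfolding \<phi>_def zz by (rule conv_basis_val(1)[OF False])
          have p2: "\<phi> G \<noteq> 0 \<Longrightarrow> fsz G = n \<and> (G = z \<or> fts G < m)" for G
            using conv_basis_val(2)[OF False, where z''=z'' and G=G] z zz unfolding \<phi>_def by simp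
          have csp: "fsz cs > 0" using False by (metis fsz_0 neq0_conv)
          have iphi: "inS \<phi>" unfolding \<phi>_def
            by (rule inS_conv; rule ob) (use z zz csp in \<open>auto simp: dot_def\<close>)
          define T where "T = {H. fsz H \<le> n \<and> H \<noteq> z \<and> \<phi> H \<noteq> 0}"
          have fT: "finite T" unfolding T_def by (rule finite_subset[OF _ finite_Fs[of n]]) auto
          have iT: "inS (\<lambda>G. \<Sum>H\<in>T. \<phi> H * basis H G)"
          proof (rule inS_sum[OF fT])
            fix H assume H: "H \<in> T"
            then have "fsz H = n" "fts H < m" using p2[of H] by (auto simp: T_def)
            then have "inS (basis H :: forest \<Rightarrow> 'k)" using inner by blast
            then show "inS (\<lambda>G. \<phi> H * basis H G)" by (rule inS_scale)
          qed
          have "basis z = (\<lambda>G. \<phi> G - (\<Sum>H\<in>T. \<phi> H * basis H G))"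
          proof
            fix G
            have s: "(\<Sum>H\<in>T. \<phi> H * basis H G) = (if G \<in> T then \<phi> G else 0)"
            proof -
              have "(\<Sum>H\<in>T. \<phi> H * basis H G) = (\<Sum>H\<in>T. if G = H then \<phi> H else 0)"
                by (intro sum.cong) (auto simp: basis_def)
              also have "\<dots> = (if G \<in> T then \<phi> G else 0)" using fT by simp
              finally show ?thesis .
            qed
            show "basis z G = \<phi> G - (\<Sum>H\<in>T. \<phi> H * basis H G)"
              unfolding s using p1 p2[of G] by (auto simp: T_def basis_def)
          qed
          then show ?thesis using inS_diff[OF iphi iT] by simp
        qed
      qed
    qed
  qed
qed

lemma exist_dual: "inS (basis z :: forest \<Rightarrow> 'k::field)"
  using exist_aux by blast

lemma sum_basis: "fin a \<Longrightarrow> (\<Sum>x\<in>supp a. a x * basis y x) = (a y :: 'k::field)"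
proof -
  assume fa: "fin a"
  have "(\<Sum>x\<in>supp a. a x * basis y x) = (\<Sum>x\<in>supp a. if x = y then a x else 0)"
    by (intro sum.cong) (auto simp: basis_def)
  also have "\<dots> = (if y \<in> supp a then a y else 0)"
    using fa by (simp add: fin_def)
  also have "\<dots> = a y" by (auto simp: supp_def)
  finally show ?thesis .
qed

lemma Phi_sym_sum:
  assumes "fin a" "fin b"
  shows "(\<Sum>y\<in>supp a. a y * Phi b y) = (\<Sum>G\<in>supp b. b G * Phi a G :: 'k::field)"
proof -
  have "(\<Sum>y\<in>supp a. a y * Phi b y) = (\<Sum>y\<in>supp a. \<Sum>G\<in>supp b. a y * b G * pairB G y)"
    unfolding Phi_def sum_distrib_left by (simp add: mult.assoc)
  also have "\<dots> = (\<Sum>G\<in>supp b. \<Sum>y\<in>supp a. a y * b G * pairB G y)" by (rule sum.swap)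
  also have "\<dots> = (\<Sum>G\<in>supp b. b G * Phi a G)"
    unfolding Phi_def sum_distrib_left
  proof (intro sum.cong refl)
    fix G y
    show "a y * b G * pairB G y = b G * (a y * pairB y G)"
    proof -
      have "pairB G y = (pairB y G :: 'k)" by (rule pairB_sym)
      then show ?thesis by (simp add: ac_simps)
    qed
  qed
  finally show ?thesis .
qed

lemma Phi_diff:
  assumes "fin v" "fin w"
  shows "Phi (\<lambda>x. v x - w x) G = Phi v G - (Phi w G :: 'k::field)"
proof -
  let ?S = "supp v \<union> supp w"
  have f: "finite ?S" using assms by (simp add: fin_def)
  have s: "supp (\<lambda>x. v x - w x) \<subseteq> ?S" by (auto simp: supp_def)
  have "Phi (\<lambda>x. v x - w x) G = (\<Sum>x\<in>?S. (v x - w x) * pairB x G)" by (rule Phi_super[OF f s])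
  also have "\<dots> = (\<Sum>x\<in>?S. v x * pairB x G) - (\<Sum>x\<in>?S. w x * pairB x G)"
    by (simp add: left_diff_distrib sum_subtractf)
  also have "\<dots> = Phi v G - Phi w G"
    using Phi_super[OF f, of v G] Phi_super[OF f, of w G] by simp
  finally show ?thesis .
qed

lemma Phi_inj:
  assumes d: "fin d" and z: "\<And>G. Phi d G = (0 :: 'k::field)"
  shows "d = (\<lambda>_. 0)"
proof
  fix y
  obtain u :: "forest \<Rightarrow> 'k" where u: "fin u" "Phi u = basis y" using exist_dual[of y] unfolding inS_def by blast
  have "d y = (\<Sum>x\<in>supp d. d x * Phi u x)" unfolding u(2) sum_basis[OF d] ..
  also have "\<dots> = (\<Sum>H\<in>supp u. u H * Phi d H)" by (rule Phi_sym_sum[OF d u(1)])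
  also have "\<dots> = 0" by (simp add: z)
  finally show "d y = 0" .
qed

lemma Phi_unique:
  assumes "fin v" "fin w" "\<And>G. Phi v G = (Phi w G :: 'k::field)"
  shows "v = w"
proof -
  have fd: "fin (\<lambda>x. v x - w x)"
  proof -
    have "supp (\<lambda>x. v x - w x) \<subseteq> supp v \<union> supp w" by (auto simp: supp_def)
    moreover have "finite (supp v \<union> supp w)" using assms(1,2) by (simp add: fin_def)
    ultimately show ?thesis unfolding fin_def by (rule finite_subset)
  qed
  have "(\<lambda>x. v x - w x) = (\<lambda>_. 0)"
    by (rule Phi_inj[OF fd]) (simp add: Phi_diff[OF assms(1,2)] assms(3))
  show ?thesis
  proof
    fix x show "v x = w x" using fun_cong[OF \<open>(\<lambda>x. v x - w x) = (\<lambda>_. 0)\<close>, of x] by simp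
  qed
qed

lemma fdual_char: "(fin v \<and> (\<forall>G. pair v (basis G) = (if G = F then 1 else 0))) \<longleftrightarrow> (fin v \<and> Phi v = (basis F :: forest \<Rightarrow> 'k::field))"
  unfolding pair_basis by (auto simp: basis_def fun_eq_iff)

lemma fdual_spec: "fin (fdual F :: forest \<Rightarrow> 'k::field)" "Phi (fdual F :: forest \<Rightarrow> 'k) = basis F"
proof -
  obtain u :: "forest \<Rightarrow> 'k" where u: "fin u" "Phi u = basis F" using exist_dual[of F] unfolding inS_def by blast
  have ex1: "\<exists>!v::forest \<Rightarrow> 'k. fin v \<and> (\<forall>G. pair v (basis G) = (if G = F then 1 else 0))"
    unfolding fdual_char
  proof (rule ex1I[of _ u])
    show "fin u \<and> Phi u = basis F" using u by blast
  next
    fix v :: "forest \<Rightarrow> 'k" assume "fin v \<and> Phi v = basis F"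
    then show "v = u" using u by (intro Phi_unique) auto
  qed
  have "fin (fdual F :: forest \<Rightarrow> 'k) \<and> (\<forall>G. pair (fdual F :: forest \<Rightarrow> 'k) (basis G) = (if G = F then 1 else 0))"
    unfolding fdual_def by (rule theI'[OF ex1])
  then have "fin (fdual F :: forest \<Rightarrow> 'k) \<and> Phi (fdual F :: forest \<Rightarrow> 'k) = basis F"
    unfolding fdual_char .
  then show "fin (fdual F :: forest \<Rightarrow> 'k::field)" "Phi (fdual F :: forest \<Rightarrow> 'k) = basis F" by auto
qed




lemma fdual_eq: "fin v \<Longrightarrow> Phi v = basis F \<Longrightarrow> fdual F = (v :: forest \<Rightarrow> 'k::field)"
  apply (rule Phi_unique[OF fdual_spec(1)])
   apply assumption
  apply (simp add: fdual_spec(2))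
  done

lemma fdual_sym: "(fdual F x :: 'k::field) = fdual x F"
proof -
  let ?VF = "fdual F :: forest \<Rightarrow> 'k" and ?Vx = "fdual x :: forest \<Rightarrow> 'k"
  have "?VF x = (\<Sum>y\<in>supp ?VF. ?VF y * basis x y)"
    by (rule sum_basis[OF fdual_spec(1), symmetric])
  also have "\<dots> = (\<Sum>y\<in>supp ?VF. ?VF y * Phi ?Vx y)"
    by (simp add: fdual_spec(2))
  also have "\<dots> = (\<Sum>G\<in>supp ?Vx. ?Vx G * Phi ?VF G)"
    by (rule Phi_sym_sum[OF fdual_spec(1) fdual_spec(1)])
  also have "\<dots> = (\<Sum>G\<in>supp ?Vx. ?Vx G * basis F G)"
    by (simp add: fdual_spec(2))
  also have "\<dots> = ?Vx F" by (rule sum_basis[OF fdual_spec(1)])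
  finally show ?thesis .
qed

lemma fdual_grade: "(fdual F x :: 'k::field) \<noteq> 0 \<Longrightarrow> fsz x = fsz F"
proof -
  let ?V = "fdual F :: forest \<Rightarrow> 'k"
  define w where "w = (\<lambda>x. if fsz x = fsz F then ?V x else 0)"
  have fV: "finite (supp ?V)" using fdual_spec(1) by (simp add: fin_def)
  have sw: "supp w \<subseteq> supp ?V" by (auto simp: supp_def w_def)
  have fw: "fin w" using fV sw finite_subset unfolding fin_def by blast
  have "Phi w G = Phi ?V G" for G
  proof -
    have "Phi w G = (\<Sum>x\<in>supp ?V. w x * pairB x G)" by (rule Phi_super[OF fV sw])
    also have "\<dots> = Phi ?V G"
    proof (cases "fsz G = fsz F")
      case True
      then show ?thesis unfolding Phi_def w_def by (intro sum.cong) (auto simp: pairB_zero)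
    next
      case False
      have "(\<Sum>x\<in>supp ?V. w x * pairB x G) = 0"
        using False by (intro sum.neutral) (auto simp: w_def pairB_zero)
      moreover have "Phi ?V G = 0" using False unfolding fdual_spec(2) by (auto simp: basis_def)
      ultimately show ?thesis by simp
    qed
    finally show ?thesis .
  qed
  then have "?V = w" by (intro Phi_unique[OF fdual_spec(1) fw]) simp
  then have e: "?V x = w x" by simp
  show "(fdual F x :: 'k) \<noteq> 0 \<Longrightarrow> fsz x = fsz F"
  proof (rule ccontr)
    assume nz: "(fdual F x :: 'k) \<noteq> 0" and ne: "fsz x \<noteq> fsz F"
    then have "w x = 0" by (simp add: w_def)
    then show False using e nz by simp
  qed
qed

lemma part1: "Bplus (fdual F :: forest \<Rightarrow> 'k::field) = fdual (dot # F)"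
proof -
  have "fdual (dot # F) = Bp (fdual F :: forest \<Rightarrow> 'k)"
  proof (rule fdual_eq)
    show "fin (Bp (fdual F :: forest \<Rightarrow> 'k))" by (rule fin_Bp[OF fdual_spec(1)])
    show "Phi (Bp (fdual F :: forest \<Rightarrow> 'k)) = basis (dot # F)"
    proof
      fix G
      show "Phi (Bp (fdual F :: forest \<Rightarrow> 'k)) G = basis (dot # F) G"
        unfolding Phi_Bp[OF fdual_spec(1)] fdual_spec(2) by (cases G) (auto simp: basis_def)
    qed
  qed
  then show ?thesis by (simp add: Bplus_Bp)
qed

lemma gammaB_eval: "(gammaB x H :: 'k::comm_ring_1) = (if x = dot # H then 1 else 0)"
  by (cases x) (auto simp: basis_def)

lemma gamma_eval: "fin v \<Longrightarrow> gamma v H = (v (dot # H) :: 'k::field)"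
proof -
  assume fv: "fin v"
  have "gamma v H = (\<Sum>x\<in>supp v. v x * gammaB x H)" by (simp add: gamma_def lin_def)
  also have "\<dots> = (\<Sum>x\<in>supp v. if x = dot # H then v x else 0)"
    by (intro sum.cong) (auto simp: gammaB_eval)
  also have "\<dots> = (if dot # H \<in> supp v then v (dot # H) else 0)" using fv by (simp add: fin_def)
  also have "\<dots> = v (dot # H)" by (auto simp: supp_def)
  finally show ?thesis .
qed

lemma part2: "gamma (fdual F :: forest \<Rightarrow> 'k::field) =
           (if (\<exists>t. F = [t]) then fdual (children (hd F)) else (\<lambda>_. 0))"
proof
  fix H
  have "gamma (fdual F :: forest \<Rightarrow> 'k) H = fdual F (dot # H)" by (rule gamma_eval[OF fdual_spec(1)])
  also have "\<dots> = fdual (dot # H) F" by (rule fdual_sym)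
  also have "\<dots> = Bp (fdual H :: forest \<Rightarrow> 'k) F" by (simp add: part1[symmetric] Bplus_Bp)
  also have "\<dots> = (if (\<exists>t. F = [t]) then fdual (children (hd F)) else (\<lambda>_. 0)) H"
  proof (cases "\<exists>t. F = [t]")
    case True
    then obtain t where t: "F = [t]" by blast
    obtain c where c: "t = Node c" by (cases t)
    have "Bp (fdual H :: forest \<Rightarrow> 'k) F = fdual H c" using t c by (auto simp: Bp_def)
    also have "\<dots> = fdual c H" by (rule fdual_sym)
    finally show ?thesis using t c by simp
  next
    case False
    then have "\<not> (\<exists>F'. F = [Node F'])" by blast
    then show ?thesis using False by (simp add: Bp_def)
  qed
  finally show "gamma (fdual F :: forest \<Rightarrow> 'k) H = (if (\<exists>t. F = [t]) then fdual (children (hd F)) else (\<lambda>_. 0)) H" .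
qed

lemma finite_splits: "finite {(x, z). x @ z = (F :: 'a list)}"
proof -
  have "{(x, z). x @ z = F} \<subseteq> (\<lambda>i. (take i F, drop i F)) ` {..length F}"
  proof
    fix q assume "q \<in> {(x, z). x @ z = F}"
    then obtain x z where q: "q = (x, z)" "x @ z = F" by blast
    then have "q = (take (length x) F, drop (length x) F)" by auto
    moreover have "length x \<in> {..length F}" using q by auto
    ultimately show "q \<in> (\<lambda>i. (take i F, drop i F)) ` {..length F}" by blast
  qed
  then show ?thesis by (rule finite_subset) simp
qed

lemma conv_eq:
  assumes "fin v" "fin w"
  shows "conv v w F = (\<Sum>q\<in>{(x, z). x @ z = F}. v (snd q) * w (fst q) :: 'k::field)"
proof -
  let ?Q = "supp w \<times> supp v"
  have fQ: "finite ?Q" using assms by (simp add: fin_def)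
  have "conv v w F = (\<Sum>q\<in>{q\<in>?Q. fst q @ snd q = F}. v (snd q) * w (fst q))"
    unfolding conv_def using fQ by (simp add: sum.inter_filter)
  also have "\<dots> = (\<Sum>q\<in>{(x, z). x @ z = F}. v (snd q) * w (fst q))"
    by (rule sum.mono_neutral_left[OF finite_splits]) (auto simp: supp_def)
  finally show ?thesis .
qed

lemma deltaB_eval: "(deltaB x (a, b) :: 'k::comm_ring_1) = (if \<exists>k\<le>fsz x. a = pre k x \<and> b = suf k x then 1 else 0)"
  unfolding deltaB_ind ind_D_eval ..

lemma basis_sum_E: "(\<Sum>k\<in>{..fsz G}. (basis a (pre k G) :: 'k::field) * basis b (suf k G))
   = (if \<exists>k\<le>fsz G. a = pre k G \<and> b = suf k G then 1 else 0)"
proof (cases "\<exists>k\<le>fsz G. a = pre k G \<and> b = suf k G")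
  case True
  then obtain k0 where k0: "k0 \<le> fsz G" "a = pre k0 G" "b = suf k0 G" by blast
  have "(\<Sum>k\<in>{..fsz G}. (basis a (pre k G) :: 'k) * basis b (suf k G)) = (\<Sum>k\<in>{..fsz G}. if k = k0 then 1 else 0)"
  proof (intro sum.cong refl)
    fix k assume k: "k \<in> {..fsz G}"
    show "(basis a (pre k G) :: 'k) * basis b (suf k G) = (if k = k0 then 1 else 0)"
    proof (cases "pre k G = a \<and> suf k G = b")
      case True
      then have "fsz (pre k G) = fsz (pre k0 G)" using k0 by simp
      then have "k = k0" using k k0 by simp
      then show ?thesis using True by (simp add: basis_def)
    next
      case False
      then have "k \<noteq> k0" using k0 by auto
      then show ?thesis using False by (auto simp: basis_def)
    qed
  qed
  also have "\<dots> = 1" using k0 by simp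
  finally show ?thesis using True by simp
next
  case False
  have "(\<Sum>k\<in>{..fsz G}. (basis a (pre k G) :: 'k) * basis b (suf k G)) = 0"
    using False by (intro sum.neutral) (auto simp: basis_def)
  then show ?thesis using False by simp
qed

lemma part3_aux:
  "(\<lambda>F. Delta (fdual F :: forest \<Rightarrow> 'k::field) (a, b)) = conv (fdual a) (fdual b)"
proof -
  define n where "n = fsz a + fsz b"
  define N where "N = {x::forest. fsz x \<le> n}"
  define E where "E = (\<lambda>x. (deltaB x (a, b) :: 'k))"
  have fN: "finite N" unfolding N_def by (rule finite_Fs)
  have EN: "E x \<noteq> 0 \<Longrightarrow> x \<in> N" for x
  proof -
    assume "E x \<noteq> 0"
    then obtain k where "k \<le> fsz x" "a = pre k x" "b = suf k x"
      unfolding E_def deltaB_eval by (auto split: if_splits)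
    then show "x \<in> N" unfolding N_def n_def by simp
  qed
  have VN: "(fdual x F :: 'k) \<noteq> 0 \<Longrightarrow> x \<in> N \<Longrightarrow> F \<in> N" for x F
  proof -
    assume h: "(fdual x F :: 'k) \<noteq> 0" "x \<in> N"
    have "fsz F = fsz x" by (rule fdual_grade[OF h(1)])
    then show "F \<in> N" using h(2) unfolding N_def by simp
  qed
  define l where "l = (\<lambda>F. Delta (fdual F :: forest \<Rightarrow> 'k) (a, b))"
  have lF: "l F = (\<Sum>x\<in>N. fdual x F * E x)" for F
  proof -
    let ?V = "fdual F :: forest \<Rightarrow> 'k"
    let ?U = "supp ?V \<union> N"
    have fU: "finite ?U" using fN fdual_spec(1)[of F] by (simp add: fin_def)
    have "l F = (\<Sum>x\<in>supp ?V. ?V x * E x)" unfolding l_def Delta_def lin_def E_def ..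
    also have "\<dots> = (\<Sum>x\<in>?U. ?V x * E x)"
      by (rule sum.mono_neutral_left[OF fU]) (auto simp: supp_def)
    also have "\<dots> = (\<Sum>x\<in>N. ?V x * E x)"
      by (rule sum.mono_neutral_left[OF fU, symmetric]) (use EN in auto)
    also have "\<dots> = (\<Sum>x\<in>N. fdual x F * E x)" by (simp add: fdual_sym[of F])
    finally show ?thesis .
  qed
  have sl: "supp l \<subseteq> N"
  proof
    fix F assume "F \<in> supp l"
    then have "l F \<noteq> 0" by (simp add: supp_def)
    then obtain x where "x \<in> N" "(fdual x F :: 'k) * E x \<noteq> 0"
      unfolding lF using sum.not_neutral_contains_not_neutral by blast
    then show "F \<in> N" using VN by auto
  qed
  have fl: "fin l" using sl fN finite_subset unfolding fin_def by blast
  have Pl: "Phi l G = E G" for G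
  proof -
    have "Phi l G = (\<Sum>F\<in>N. l F * pairB F G)" by (rule Phi_super[OF fN sl])
    also have "\<dots> = (\<Sum>F\<in>N. \<Sum>x\<in>N. E x * (fdual x F * pairB F G))"
      unfolding lF sum_distrib_right by (simp add: ac_simps)
    also have "\<dots> = (\<Sum>x\<in>N. E x * (\<Sum>F\<in>N. fdual x F * pairB F G))"
      unfolding sum_distrib_left by (rule sum.swap)
    also have "\<dots> = (\<Sum>x\<in>N. E x * Phi (fdual x :: forest \<Rightarrow> 'k) G)"
    proof (intro sum.cong refl)
      fix x assume x: "x \<in> N"
      have "supp (fdual x :: forest \<Rightarrow> 'k) \<subseteq> N" using VN x by (auto simp: supp_def)
      then show "E x * (\<Sum>F\<in>N. fdual x F * pairB F G) = E x * Phi (fdual x :: forest \<Rightarrow> 'k) G"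
        using Phi_super[OF fN, of "fdual x :: forest \<Rightarrow> 'k" G] by simp
    qed
    also have "\<dots> = (\<Sum>x\<in>N. if G = x then E x else 0)"
      unfolding fdual_spec(2) by (intro sum.cong) (auto simp: basis_def)
    also have "\<dots> = E G" using fN EN by auto
    finally show ?thesis .
  qed
  let ?m = "conv (fdual a :: forest \<Rightarrow> 'k) (fdual b)"
  have fm: "fin ?m" by (rule Phi_conv(1)[OF fdual_spec(1) fdual_spec(1)])
  have Pm: "Phi ?m G = E G" for G
    unfolding Phi_conv(2)[OF fdual_spec(1) fdual_spec(1)] fdual_spec(2) basis_sum_E E_def deltaB_eval ..
  have "l = ?m" by (rule Phi_unique[OF fl fm]) (simp add: Pl Pm)
  then show ?thesis unfolding l_def .
qed


theorem proposition21:
  fixes F :: forest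
  shows "Bplus (fdual F :: forest \<Rightarrow> 'k::field) = fdual (dot # F)
    \<and> gamma (fdual F :: forest \<Rightarrow> 'k::field) =
           (if (\<exists>t. F = [t]) then fdual (children (hd F)) else (\<lambda>_. 0))
    \<and> Delta (fdual F :: forest \<Rightarrow> 'k::field) =
           (\<lambda>p. \<Sum>(F1, F2)\<in>{(F1, F2). F1 @ F2 = F}.
                   (fdual F2 :: forest \<Rightarrow> 'k) (fst p) * fdual F1 (snd p))"
proof (intro conjI)
  show "Bplus (fdual F :: forest \<Rightarrow> 'k::field) = fdual (dot # F)" by (rule part1)
  show "gamma (fdual F :: forest \<Rightarrow> 'k::field) =
           (if (\<exists>t. F = [t]) then fdual (children (hd F)) else (\<lambda>_. 0))" by (rule part2)
  show "Delta (fdual F :: forest \<Rightarrow> 'k::field) =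
           (\<lambda>p. \<Sum>(F1, F2)\<in>{(F1, F2). F1 @ F2 = F}.
                   (fdual F2 :: forest \<Rightarrow> 'k) (fst p) * fdual F1 (snd p))"
  proof
    fix p :: "forest \<times> forest"
    obtain a b where p: "p = (a, b)" by (cases p)
    have "Delta (fdual F :: forest \<Rightarrow> 'k) (a, b) = conv (fdual a :: forest \<Rightarrow> 'k) (fdual b) F"
      using fun_cong[OF part3_aux[where 'k='k, of a b], of F] by simp
    also have "\<dots> = (\<Sum>q\<in>{(x, z). x @ z = F}. (fdual a :: forest \<Rightarrow> 'k) (snd q) * fdual b (fst q))"
      by (rule conv_eq[OF fdual_spec(1) fdual_spec(1)])
    also have "\<dots> = (\<Sum>(F1, F2)\<in>{(F1, F2). F1 @ F2 = F}. (fdual F2 :: forest \<Rightarrow> 'k) a * fdual F1 b)"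
    proof (intro sum.cong refl)
      fix q :: "forest \<times> forest"
      have "(fdual a (snd q) :: 'k) = fdual (snd q) a" by (rule fdual_sym)
      moreover have "(fdual b (fst q) :: 'k) = fdual (fst q) b" by (rule fdual_sym)
      ultimately show "(fdual a :: forest \<Rightarrow> 'k) (snd q) * fdual b (fst q) = (case q of (F1, F2) \<Rightarrow> (fdual F2 :: forest \<Rightarrow> 'k) a * fdual F1 b)"
        by (simp add: case_prod_beta)
    qed
    finally show "Delta (fdual F :: forest \<Rightarrow> 'k) p = (\<Sum>(F1, F2)\<in>{(F1, F2). F1 @ F2 = F}.
                   (fdual F2 :: forest \<Rightarrow> 'k) (fst p) * fdual F1 (snd p))" using p by simp
  qed
qed

end
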